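(* Let $G$ be a finite group, $H\le G$, $g\in G$, and $C=H\cap H^g$. Then $\langle H,\psi_{g^{-1},H}(H)\rangle\cong I(\mathbb{Z}[H/C])\rtimes H$ (inside $\mathcal{U}(\mathbb{Z}G)$), where $h\in H$ acts on $I(\mathbb{Z}[H/C])$ by left multiplication by $h^{-1}$. In particular, the normal subgroup generated by the units $1+(1-h)g^{-1}\widetilde{H}$, $h\in H$, is free abelian of rank $[H:C]-1$.
   Context: $\widetilde{H}=\sum_{h\in H}h$; $\psi_{g^{-1},H}:H\to\mathcal{U}(\mathbb{Z}G)$, $h\mapsto h+(1-h)g^{-1}\widetilde{H}$. $H^g=g^{-1}Hg$. $I(\mathbb{Z}[H/C])$ is the kernel of the $\mathbb{Z}H$-module map $\mathbb{Z}[H/C]\to\mathbb{Z}$, $hC\mapsto1$. *)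

theory Defs
  imports "HOL-Algebra.Algebra" "HOL-Algebra.Free_Abelian_Groups"
begin

definition grp_ring :: "('a, 'b) monoid_scheme \<Rightarrow> ('a \<Rightarrow> int) set" where
  "grp_ring G = {x. \<forall>z. z \<notin> carrier G \<longrightarrow> x z = 0}"

definition gr_add :: "('a \<Rightarrow> int) \<Rightarrow> ('a \<Rightarrow> int) \<Rightarrow> ('a \<Rightarrow> int)" where
  "gr_add x y = (\<lambda>z. x z + y z)"

definition gr_diff :: "('a \<Rightarrow> int) \<Rightarrow> ('a \<Rightarrow> int) \<Rightarrow> ('a \<Rightarrow> int)" where
  "gr_diff x y = (\<lambda>z. x z - y z)"

definition gr_mult :: "('a, 'b) monoid_scheme \<Rightarrow> ('a \<Rightarrow> int) \<Rightarrow> ('a \<Rightarrow> int) \<Rightarrow> ('a \<Rightarrow> int)" where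
  "gr_mult G x y = (\<lambda>z. if z \<in> carrier G
      then (\<Sum>u\<in>carrier G. x u * y (inv\<^bsub>G\<^esub> u \<otimes>\<^bsub>G\<^esub> z)) else 0)"

definition gr_basis :: "('a, 'b) monoid_scheme \<Rightarrow> 'a \<Rightarrow> ('a \<Rightarrow> int)" where
  "gr_basis G a = (\<lambda>z. if z \<in> carrier G \<and> z = a then 1 else 0)"

definition gr_one :: "('a, 'b) monoid_scheme \<Rightarrow> ('a \<Rightarrow> int)" where
  "gr_one G = gr_basis G \<one>\<^bsub>G\<^esub>"

text \<open>The element H-tilde = sum of the elements of H.\<close>
definition gr_tilde :: "('a, 'b) monoid_scheme \<Rightarrow> 'a set \<Rightarrow> ('a \<Rightarrow> int)" where
  "gr_tilde G H = (\<lambda>z. if z \<in> carrier G \<and> z \<in> H then 1 else 0)"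

definition units_ZG :: "('a, 'b) monoid_scheme \<Rightarrow> ('a \<Rightarrow> int) monoid" where
  "units_ZG G = \<lparr>carrier = {x \<in> grp_ring G. \<exists>y\<in>grp_ring G.
        gr_mult G x y = gr_one G \<and> gr_mult G y x = gr_one G},
     monoid.mult = gr_mult G, one = gr_one G\<rparr>"

definition psi :: "('a, 'b) monoid_scheme \<Rightarrow> 'a \<Rightarrow> 'a set \<Rightarrow> 'a \<Rightarrow> ('a \<Rightarrow> int)" where
  "psi G a H h = gr_add (gr_basis G h)
      (gr_mult G (gr_mult G (gr_diff (gr_one G) (gr_basis G h)) (gr_basis G a)) (gr_tilde G H))"

definition bicyc_unit :: "('a, 'b) monoid_scheme \<Rightarrow> 'a \<Rightarrow> 'a set \<Rightarrow> 'a \<Rightarrow> ('a \<Rightarrow> int)" where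
  "bicyc_unit G a H h = gr_add (gr_one G)
      (gr_mult G (gr_mult G (gr_diff (gr_one G) (gr_basis G h)) (gr_basis G a)) (gr_tilde G H))"

definition left_cosets_in :: "('a, 'b) monoid_scheme \<Rightarrow> 'a set \<Rightarrow> 'a set \<Rightarrow> 'a set set" where
  "left_cosets_in G H C = (\<lambda>h. h <#\<^bsub>G\<^esub> C) ` H"

definition aug_ideal :: "'c set \<Rightarrow> ('c \<Rightarrow> int) monoid" where
  "aug_ideal Q = \<lparr>carrier = {f. (\<forall>q. q \<notin> Q \<longrightarrow> f q = 0) \<and> sum f Q = 0},
     monoid.mult = (\<lambda>f f'. \<lambda>q. f q + f' q), one = (\<lambda>_. 0)\<rparr>"

text \<open>Left multiplication by a group element a on Z[Q], Q a set of left cosets: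
  the linear extension of X \<mapsto> aX.\<close>
definition coset_lmult :: "('a, 'b) monoid_scheme \<Rightarrow> 'a set set \<Rightarrow> 'a \<Rightarrow> ('a set \<Rightarrow> int) \<Rightarrow> ('a set \<Rightarrow> int)" where
  "coset_lmult G Q a f = (\<lambda>D. \<Sum>B\<in>{B \<in> Q. l_coset G a B = D}. f B)"

text \<open>Semidirect product N \<rtimes> K where K acts on N by act (on the right,
  n^k = act k n): (n,k)(n',k') = (act k' n * n', k k').\<close>
definition semidirect_r :: "('n, 'x) monoid_scheme \<Rightarrow> ('k, 'y) monoid_scheme
    \<Rightarrow> ('k \<Rightarrow> 'n \<Rightarrow> 'n) \<Rightarrow> ('n \<times> 'k) monoid" where
  "semidirect_r N K act = \<lparr>carrier = carrier N \<times> carrier K,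
     monoid.mult = (\<lambda>(n, k) (n', k'). (act k' n \<otimes>\<^bsub>N\<^esub> n', k \<otimes>\<^bsub>K\<^esub> k')),
     one = (\<one>\<^bsub>N\<^esub>, \<one>\<^bsub>K\<^esub>)\<rparr>"

definition normal_closure :: "('a, 'b) monoid_scheme \<Rightarrow> 'a set \<Rightarrow> 'a set" where
  "normal_closure K S = generate K {k \<otimes>\<^bsub>K\<^esub> s \<otimes>\<^bsub>K\<^esub> inv\<^bsub>K\<^esub> k | k s. k \<in> carrier K \<and> s \<in> S}"

end

theory Submission
  imports Defs
begin


locale fgroup = group G for G (structure) +
  assumes fin: "finite (carrier G)"
begin

lemma bij_lmult: "a \<in> carrier G \<Longrightarrow> bij_betw (\<lambda>u. a \<otimes> u) (carrier G) (carrier G)"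
  by (rule bij_betw_byWitness[where f' = "\<lambda>u. inv a \<otimes> u"]) (auto simp: m_assoc[symmetric])

lemma bij_rmult: "a \<in> carrier G \<Longrightarrow> bij_betw (\<lambda>u. u \<otimes> a) (carrier G) (carrier G)"
  by (rule bij_betw_byWitness[where f' = "\<lambda>u. u \<otimes> inv a"]) (auto simp: m_assoc)

lemma gm_out: "z \<notin> carrier G \<Longrightarrow> gr_mult G x y z = 0"
  by (simp add: gr_mult_def)

lemma gm_in: "z \<in> carrier G \<Longrightarrow> gr_mult G x y z = (\<Sum>u\<in>carrier G. x u * y (inv u \<otimes> z))"
  by (simp add: gr_mult_def)

lemma gm_basis_l:
  assumes "b \<in> carrier G" "z \<in> carrier G"
  shows "gr_mult G (gr_basis G b) y z = y (inv b \<otimes> z)"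
proof -
  have "gr_mult G (gr_basis G b) y z = (\<Sum>u\<in>carrier G. if u = b then y (inv b \<otimes> z) else 0)"
    using assms by (auto simp: gm_in gr_basis_def intro!: sum.cong)
  also have "\<dots> = y (inv b \<otimes> z)" using assms fin by simp
  finally show ?thesis .
qed

lemma gm_basis_r:
  assumes "b \<in> carrier G" "z \<in> carrier G"
  shows "gr_mult G y (gr_basis G b) z = y (z \<otimes> inv b)"
proof -
  have e: "u \<in> carrier G \<Longrightarrow> (inv u \<otimes> z = b) = (u = z \<otimes> inv b)" for u
    using assms by (metis inv_closed inv_inv m_closed inv_solve_left inv_solve_right)
  have "gr_mult G y (gr_basis G b) z = (\<Sum>u\<in>carrier G. if u = z \<otimes> inv b then y (z \<otimes> inv b) else 0)"
    using assms by (auto simp: gm_in gr_basis_def e intro!: sum.cong)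
  also have "\<dots> = y (z \<otimes> inv b)" using assms fin by simp
  finally show ?thesis .
qed

lemma gm_assoc: "gr_mult G (gr_mult G x y) w = gr_mult G x (gr_mult G y w)"
proof
  fix z
  show "gr_mult G (gr_mult G x y) w z = gr_mult G x (gr_mult G y w) z"
  proof (cases "z \<in> carrier G")
    case False thus ?thesis by (simp add: gm_out)
  next
    case z: True
    have "gr_mult G (gr_mult G x y) w z = (\<Sum>u\<in>carrier G. \<Sum>v\<in>carrier G. x v * y (inv v \<otimes> u) * w (inv u \<otimes> z))"
      using z by (simp add: gm_in sum_distrib_right)
    also have "\<dots> = (\<Sum>v\<in>carrier G. \<Sum>u\<in>carrier G. x v * y (inv v \<otimes> u) * w (inv u \<otimes> z))"
      by (rule sum.swap)
    also have "\<dots> = (\<Sum>v\<in>carrier G. x v * (\<Sum>t\<in>carrier G. y t * w (inv t \<otimes> (inv v \<otimes> z))))"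
    proof (rule sum.cong[OF refl])
      fix v assume v: "v \<in> carrier G"
      have "(\<Sum>t\<in>carrier G. y t * w (inv t \<otimes> (inv v \<otimes> z)))
          = (\<Sum>u\<in>carrier G. y (inv v \<otimes> u) * w (inv (inv v \<otimes> u) \<otimes> (inv v \<otimes> z)))"
        using sum.reindex_bij_betw[OF bij_lmult[of "inv v"], of "\<lambda>t. y t * w (inv t \<otimes> (inv v \<otimes> z))"] v
        by simp
      also have "\<dots> = (\<Sum>u\<in>carrier G. y (inv v \<otimes> u) * w (inv u \<otimes> z))"
      proof (rule sum.cong[OF refl])
        fix u assume u: "u \<in> carrier G"
        have i: "inv (inv v \<otimes> u) = inv u \<otimes> v" using u v by (simp add: inv_mult_group)
        have "v \<otimes> (inv v \<otimes> z) = z" using v z by (simp add: m_assoc[symmetric])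
        hence "inv (inv v \<otimes> u) \<otimes> (inv v \<otimes> z) = inv u \<otimes> z" unfolding i using u v z by (simp add: m_assoc)
        thus "y (inv v \<otimes> u) * w (inv (inv v \<otimes> u) \<otimes> (inv v \<otimes> z)) = y (inv v \<otimes> u) * w (inv u \<otimes> z)" by simp
      qed
      finally show "(\<Sum>u\<in>carrier G. x v * y (inv v \<otimes> u) * w (inv u \<otimes> z)) =
          x v * (\<Sum>t\<in>carrier G. y t * w (inv t \<otimes> (inv v \<otimes> z)))"
        by (simp add: sum_distrib_left mult.assoc)
    qed
    also have "\<dots> = gr_mult G x (gr_mult G y w) z"
      using z by (simp add: gm_in)
    finally show ?thesis .
  qed
qed

lemma gm_one_l: "x \<in> grp_ring G \<Longrightarrow> gr_mult G (gr_one G) x = x"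
proof (rule ext)
  fix z assume x: "x \<in> grp_ring G"
  show "gr_mult G (gr_one G) x z = x z"
  proof (cases "z \<in> carrier G")
    case True thus ?thesis unfolding gr_one_def by (subst gm_basis_l) auto
  qed (use x in \<open>auto simp: gm_out grp_ring_def\<close>)
qed

lemma gm_one_r: "x \<in> grp_ring G \<Longrightarrow> gr_mult G x (gr_one G) = x"
proof (rule ext)
  fix z assume x: "x \<in> grp_ring G"
  show "gr_mult G x (gr_one G) z = x z"
  proof (cases "z \<in> carrier G")
    case True thus ?thesis unfolding gr_one_def by (subst gm_basis_r) auto
  qed (use x in \<open>auto simp: gm_out grp_ring_def\<close>)
qed

lemma gm_ring: "gr_mult G x y \<in> grp_ring G"
  by (simp add: grp_ring_def gm_out)

lemma gr_one_ring: "gr_one G \<in> grp_ring G"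
  by (simp add: grp_ring_def gr_one_def gr_basis_def)

lemma basis_ring: "gr_basis G b \<in> grp_ring G"
  by (simp add: grp_ring_def gr_basis_def)

lemma add_ring: "x \<in> grp_ring G \<Longrightarrow> y \<in> grp_ring G \<Longrightarrow> gr_add x y \<in> grp_ring G"
  by (simp add: grp_ring_def gr_add_def)

lemma gm_add_l: "gr_mult G (gr_add x y) w = gr_add (gr_mult G x w) (gr_mult G y w)"
  by (rule ext) (simp add: gr_add_def gr_mult_def distrib_right sum.distrib)

lemma gm_add_r: "gr_mult G w (gr_add x y) = gr_add (gr_mult G w x) (gr_mult G w y)"
  by (rule ext) (simp add: gr_add_def gr_mult_def distrib_left sum.distrib)

lemma gm_diff_l: "gr_mult G (gr_diff x y) w = gr_diff (gr_mult G x w) (gr_mult G y w)"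
  by (rule ext) (simp add: gr_diff_def gr_mult_def left_diff_distrib sum_subtractf)

lemma basis_mult: "a \<in> carrier G \<Longrightarrow> b \<in> carrier G \<Longrightarrow>
   gr_mult G (gr_basis G a) (gr_basis G b) = gr_basis G (a \<otimes> b)"
proof (rule ext)
  fix x assume a: "a \<in> carrier G" and b: "b \<in> carrier G"
  show "gr_mult G (gr_basis G a) (gr_basis G b) x = gr_basis G (a \<otimes> b) x"
  proof (cases "x \<in> carrier G")
    case True
    have "(inv a \<otimes> x = b) = (x = a \<otimes> b)" using a b True
      by (metis inv_solve_left)
    thus ?thesis using True a b by (subst gm_basis_l) (auto simp: gr_basis_def)
  next
    case False thus ?thesis by (simp add: gm_out gr_basis_def)
  qed
qed

lemma units_group: "group (units_ZG G)"
proof (rule groupI)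
  show "x \<otimes>\<^bsub>units_ZG G\<^esub> y \<in> carrier (units_ZG G)" if "x \<in> carrier (units_ZG G)" "y \<in> carrier (units_ZG G)" for x y
  proof -
    from that obtain x' y' where x: "x \<in> grp_ring G" "x' \<in> grp_ring G" "gr_mult G x x' = gr_one G" "gr_mult G x' x = gr_one G"
      and y: "y \<in> grp_ring G" "y' \<in> grp_ring G" "gr_mult G y y' = gr_one G" "gr_mult G y' y = gr_one G"
      by (auto simp: units_ZG_def)
    have "gr_mult G (gr_mult G x y) (gr_mult G y' x') = gr_mult G x (gr_mult G (gr_mult G y y') x')"
      by (simp only: gm_assoc)
    also have "\<dots> = gr_one G" using x y by (simp add: gm_one_l)
    finally have 1: "gr_mult G (gr_mult G x y) (gr_mult G y' x') = gr_one G" .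
    have "gr_mult G (gr_mult G y' x') (gr_mult G x y) = gr_mult G y' (gr_mult G (gr_mult G x' x) y)"
      by (simp only: gm_assoc)
    also have "\<dots> = gr_one G" using x y by (simp add: gm_one_l)
    finally have 2: "gr_mult G (gr_mult G y' x') (gr_mult G x y) = gr_one G" .
    note 1 2
    show ?thesis using 1 2 x y by (auto simp: units_ZG_def gm_ring)
  qed
  show "\<one>\<^bsub>units_ZG G\<^esub> \<in> carrier (units_ZG G)"
    by (auto simp: units_ZG_def gr_one_ring gm_one_l intro!: bexI[of _ "gr_one G"])
  show "x \<otimes>\<^bsub>units_ZG G\<^esub> y \<otimes>\<^bsub>units_ZG G\<^esub> z = x \<otimes>\<^bsub>units_ZG G\<^esub> (y \<otimes>\<^bsub>units_ZG G\<^esub> z)" for x y z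
    by (simp add: units_ZG_def gm_assoc)
  show "\<one>\<^bsub>units_ZG G\<^esub> \<otimes>\<^bsub>units_ZG G\<^esub> x = x" if "x \<in> carrier (units_ZG G)" for x
    using that by (simp add: units_ZG_def gm_one_l)
  show "\<exists>y\<in>carrier (units_ZG G). y \<otimes>\<^bsub>units_ZG G\<^esub> x = \<one>\<^bsub>units_ZG G\<^esub>" if "x \<in> carrier (units_ZG G)" for x
    using that by (auto simp: units_ZG_def)
qed

end


context group begin
lemma cancel1: "x \<in> carrier G \<Longrightarrow> y \<in> carrier G \<Longrightarrow> x \<otimes> (inv x \<otimes> y) = y"
  by (simp add: m_assoc[symmetric])
lemma cancel2: "x \<in> carrier G \<Longrightarrow> y \<in> carrier G \<Longrightarrow> inv x \<otimes> (x \<otimes> y) = y"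
  by (simp add: m_assoc[symmetric])
end

locale zg = fgroup G for G (structure) +
  fixes H g
  assumes sub: "subgroup H G" and gc: "g \<in> carrier G"
begin

definition "CC = H \<inter> (inv g <# H #> g)"
definition "QQ = left_cosets_in G H CC"
definition "blk D = {z \<in> carrier G. \<exists>d\<in>D. g \<otimes> (inv d \<otimes> z) \<in> H}"
definition "XX (f :: 'a set \<Rightarrow> int) = (\<lambda>z. if z \<in> carrier G then (\<Sum>D\<in>QQ. f D * (if z \<in> blk D then 1 else 0)) else 0)"
definition "act k f = coset_lmult G QQ k f"
definition "isaug (f :: 'a set \<Rightarrow> int) \<longleftrightarrow> (\<forall>q. q \<notin> QQ \<longrightarrow> f q = 0) \<and> sum f QQ = 0"

lemma Hc: "h \<in> H \<Longrightarrow> h \<in> carrier G"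
  by (rule subgroup.mem_carrier[OF sub])
lemma Hm: "h \<in> H \<Longrightarrow> k \<in> H \<Longrightarrow> h \<otimes> k \<in> H"
  by (rule subgroup.m_closed[OF sub])
lemma Hi: "h \<in> H \<Longrightarrow> inv h \<in> H"
  by (rule subgroup.m_inv_closed[OF sub])
lemma H1: "\<one> \<in> H"
  by (rule subgroup.one_closed[OF sub])

lemma CCm1: "x \<in> inv g <# H #> g \<Longrightarrow> \<exists>h\<in>H. x = inv g \<otimes> h \<otimes> g"
  unfolding l_coset_def r_coset_def by (simp add: Bex_def)
lemma CCm2: "h \<in> H \<Longrightarrow> inv g \<otimes> h \<otimes> g \<in> inv g <# H #> g"
  unfolding l_coset_def r_coset_def by auto

lemma CC_mem: "x \<in> CC \<longleftrightarrow> x \<in> H \<and> g \<otimes> x \<otimes> inv g \<in> H"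
proof
  assume "x \<in> CC"
  then obtain h where x: "x \<in> H" "h \<in> H" "x = inv g \<otimes> h \<otimes> g"
    unfolding CC_def using CCm1 by auto
  have hc: "h \<in> carrier G" using x(2) by (rule Hc)
  have "g \<otimes> x \<otimes> inv g = h" unfolding x(3) using hc gc by (simp add: m_assoc cancel1)
  thus "x \<in> H \<and> g \<otimes> x \<otimes> inv g \<in> H" using x by simp
next
  assume x: "x \<in> H \<and> g \<otimes> x \<otimes> inv g \<in> H"
  have xc: "x \<in> carrier G" using x Hc by simp
  have "x = inv g \<otimes> (g \<otimes> x \<otimes> inv g) \<otimes> g" using xc gc by (simp add: m_assoc cancel2)
  thus "x \<in> CC" using x CCm2[of "g \<otimes> x \<otimes> inv g"] unfolding CC_def by simp
qed

lemma CC_sub: "subgroup CC G"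
  unfolding CC_def using subgroups_Inter_pair[OF sub subgroup_conjugation_is_surj1[OF gc sub]] .

lemma CC_c: "CC \<subseteq> carrier G"
  by (rule subgroup.subset[OF CC_sub])

lemma QQ_mem: "D \<in> QQ \<longleftrightarrow> (\<exists>h\<in>H. D = h <# CC)"
  unfolding QQ_def left_cosets_in_def by auto

lemma CC_QQ: "CC \<in> QQ"
  unfolding QQ_mem using lcos_mult_one[OF CC_c] subgroup.one_closed[OF sub] by metis

lemma hCC_QQ: "h \<in> H \<Longrightarrow> h <# CC \<in> QQ"
  unfolding QQ_mem by auto

lemma finQQ: "finite QQ"
proof -
  have "H \<subseteq> carrier G" using Hc by auto
  hence "finite H" by (rule finite_subset[OF _ fin])
  thus ?thesis unfolding QQ_def left_cosets_in_def by simp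
qed

lemma QQ_c: "D \<in> QQ \<Longrightarrow> D \<subseteq> carrier G"
  unfolding QQ_mem using l_coset_subset_G[OF CC_c] Hc by auto

lemma lQQ: "k \<in> H \<Longrightarrow> D \<in> QQ \<Longrightarrow> k <# D \<in> QQ"
  unfolding QQ_mem using lcos_m_assoc[OF CC_c] Hc subgroup.m_closed[OF sub] by metis

lemma blk_rep:
  assumes h: "h \<in> H" and z: "z \<in> carrier G"
  shows "z \<in> blk (h <# CC) \<longleftrightarrow> g \<otimes> (inv h \<otimes> z) \<in> H"
proof
  assume "z \<in> blk (h <# CC)"
  then obtain c where c: "c \<in> CC" "g \<otimes> (inv (h \<otimes> c) \<otimes> z) \<in> H"
    unfolding blk_def l_coset_def by auto
  have cc: "c \<in> carrier G" using c(1) CC_c by auto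
  have hc: "h \<in> carrier G" using h by (rule Hc)
  have "g \<otimes> c \<otimes> inv g \<in> H" using c(1) CC_mem by simp
  hence "(g \<otimes> c \<otimes> inv g) \<otimes> (g \<otimes> (inv (h \<otimes> c) \<otimes> z)) \<in> H"
    by (rule Hm[OF _ c(2)])
  moreover have "(g \<otimes> c \<otimes> inv g) \<otimes> (g \<otimes> (inv (h \<otimes> c) \<otimes> z)) = g \<otimes> (inv h \<otimes> z)"
    using cc hc gc z by (simp add: m_assoc inv_mult_group cancel1 cancel2)
  ultimately show "g \<otimes> (inv h \<otimes> z) \<in> H" by simp
next
  assume "g \<otimes> (inv h \<otimes> z) \<in> H"
  moreover have "h \<in> h <# CC"
    using h Hc[OF h] subgroup.one_closed[OF CC_sub] unfolding l_coset_def by force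
  ultimately show "z \<in> blk (h <# CC)" using z unfolding blk_def by auto
qed

lemma blk_disj:
  assumes h: "h \<in> H" "h' \<in> H" and z: "z \<in> blk (h <# CC)" "z \<in> blk (h' <# CC)"
  shows "h <# CC = h' <# CC"
proof -
  have zc: "z \<in> carrier G" using z blk_def by auto
  have hc: "h \<in> carrier G" "h' \<in> carrier G" using h Hc by auto
  have w: "g \<otimes> (inv h \<otimes> z) \<in> H" "g \<otimes> (inv h' \<otimes> z) \<in> H"
    using blk_rep h zc z by auto
  have "inv h \<otimes> h' \<in> CC"
  proof -
    have "(g \<otimes> (inv h \<otimes> z)) \<otimes> inv (g \<otimes> (inv h' \<otimes> z)) \<in> H"
      by (rule Hm[OF w(1) Hi[OF w(2)]])
    moreover have "(g \<otimes> (inv h \<otimes> z)) \<otimes> inv (g \<otimes> (inv h' \<otimes> z)) = g \<otimes> (inv h \<otimes> h') \<otimes> inv g"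
      using hc zc gc by (simp add: m_assoc inv_mult_group cancel1 cancel2)
    moreover have "inv h \<otimes> h' \<in> H" by (rule Hm[OF Hi[OF h(1)] h(2)])
    ultimately show ?thesis using CC_mem by simp
  qed
  hence "h' \<in> h <# CC"
    by (rule subgroup.lcos_module_rev[OF CC_sub is_group hc(1) hc(2)])
  thus ?thesis by (rule l_repr_independence[OF _ hc(1) CC_sub])
qed

lemma blk_QQ_disj:
  assumes "D \<in> QQ" "D' \<in> QQ" "z \<in> blk D" "z \<in> blk D'"
  shows "D = D'"
  using assms blk_disj QQ_mem by metis

lemma blk_c: "blk D \<subseteq> carrier G"
  unfolding blk_def by auto

lemma Hr:
  assumes w: "w \<in> carrier G" and k: "k \<in> H"
  shows "w \<otimes> k \<in> H \<longleftrightarrow> w \<in> H"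
proof
  assume a: "w \<otimes> k \<in> H"
  have kc: "k \<in> carrier G" using k by (rule Hc)
  have "(w \<otimes> k) \<otimes> inv k \<in> H" by (rule Hm[OF a Hi[OF k]])
  moreover have "(w \<otimes> k) \<otimes> inv k = w" using w kc by (simp add: m_assoc)
  ultimately show "w \<in> H" by simp
next
  assume "w \<in> H" thus "w \<otimes> k \<in> H" by (rule Hm[OF _ k])
qed

lemma blk_rinv:
  assumes "z \<in> carrier G" "k \<in> H" "D \<subseteq> carrier G"
  shows "z \<otimes> k \<in> blk D \<longleftrightarrow> z \<in> blk D"
proof -
  have kc: "k \<in> carrier G" using assms Hc by auto
  have "g \<otimes> (inv d \<otimes> (z \<otimes> k)) \<in> H \<longleftrightarrow> g \<otimes> (inv d \<otimes> z) \<in> H" if d: "d \<in> carrier G" for d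
  proof -
    have e: "g \<otimes> (inv d \<otimes> (z \<otimes> k)) = (g \<otimes> (inv d \<otimes> z)) \<otimes> k"
      using d assms kc gc by (simp add: m_assoc)
    have wc: "g \<otimes> (inv d \<otimes> z) \<in> carrier G" using d assms gc by simp
    show ?thesis unfolding e using Hr[OF wc assms(2)] .
  qed
  thus ?thesis using assms kc unfolding blk_def by auto
qed

lemma blk_ltr:
  assumes "z \<in> carrier G" "k \<in> carrier G" "D \<subseteq> carrier G"
  shows "z \<in> blk (k <# D) \<longleftrightarrow> inv k \<otimes> z \<in> blk D"
proof -
  have e: "g \<otimes> (inv (k \<otimes> d) \<otimes> z) = g \<otimes> (inv d \<otimes> (inv k \<otimes> z))" if "d \<in> D" for d
    using that assms by (auto simp add: m_assoc inv_mult_group)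
  show ?thesis
  proof
    assume "z \<in> blk (k <# D)"
    then obtain d where "d \<in> D" "g \<otimes> (inv (k \<otimes> d) \<otimes> z) \<in> H"
      unfolding blk_def l_coset_def by auto
    thus "inv k \<otimes> z \<in> blk D" using e[of d] assms unfolding blk_def by auto
  next
    assume "inv k \<otimes> z \<in> blk D"
    then obtain d where d: "d \<in> D" "g \<otimes> (inv d \<otimes> (inv k \<otimes> z)) \<in> H"
      unfolding blk_def by auto
    hence "k \<otimes> d \<in> k <# D" unfolding l_coset_def by auto
    moreover have "g \<otimes> (inv (k \<otimes> d) \<otimes> z) \<in> H" using e[of d] d by simp
    ultimately show "z \<in> blk (k <# D)" using assms unfolding blk_def by blast
  qed
qed

end


context zg begin

lemma XX_out: "z \<notin> carrier G \<Longrightarrow> XX f z = 0"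
  by (simp add: XX_def)

lemma XX_ring: "XX f \<in> grp_ring G"
  by (simp add: grp_ring_def XX_def)

lemma XX_add: "XX (\<lambda>D. f D + f' D) = gr_add (XX f) (XX f')"
  by (rule ext) (simp add: XX_def gr_add_def distrib_right sum.distrib)

lemma XX_zero: "XX (\<lambda>_. 0) = (\<lambda>_. 0)"
  by (rule ext) (simp add: XX_def)

lemma XX_rinv:
  assumes "z \<in> carrier G" "k \<in> H"
  shows "XX f (z \<otimes> k) = XX f z"
proof -
  have "z \<otimes> k \<in> carrier G" using assms Hc by simp
  moreover have "(z \<otimes> k \<in> blk D) = (z \<in> blk D)" if "D \<in> QQ" for D
    using blk_rinv[OF assms QQ_c[OF that]] .
  ultimately show ?thesis using assms(1) unfolding XX_def by (auto intro!: sum.cong)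
qed

lemma XX_at:
  assumes D0: "D0 \<in> QQ" and z: "z \<in> blk D0"
  shows "XX f z = f D0"
proof -
  have zc: "z \<in> carrier G" using z blk_c by auto
  have "XX f z = (\<Sum>D\<in>QQ. if D = D0 then f D0 else 0)"
    unfolding XX_def using zc
  proof (simp, intro sum.cong[OF refl])
    fix D assume D: "D \<in> QQ"
    show "f D * (if z \<in> blk D then 1 else 0) = (if D = D0 then f D0 else 0)"
    proof (cases "D = D0")
      case False
      hence "z \<notin> blk D" using blk_QQ_disj[OF D D0 _ z] by auto
      thus ?thesis using False by simp
    qed (simp add: z)
  qed
  also have "\<dots> = f D0" using finQQ D0 by simp
  finally show ?thesis .
qed

lemma blk_ne: "D \<in> QQ \<Longrightarrow> \<exists>z. z \<in> blk D"
proof -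
  assume "D \<in> QQ"
  then obtain h where h: "h \<in> H" "D = h <# CC" using QQ_mem by auto
  have hc: "h \<in> carrier G" using h(1) by (rule Hc)
  have "g \<otimes> (inv h \<otimes> (h \<otimes> inv g)) = \<one>" using hc gc by (simp add: cancel2)
  hence "h \<otimes> inv g \<in> blk D" using blk_rep[OF h(1)] h hc gc H1 by simp
  thus ?thesis by blast
qed

lemma XX_inj:
  assumes "\<forall>q. q \<notin> QQ \<longrightarrow> f q = 0" "\<forall>q. q \<notin> QQ \<longrightarrow> f' q = 0" "XX f = XX f'"
  shows "f = f'"
proof
  fix D show "f D = f' D"
  proof (cases "D \<in> QQ")
    case True
    then obtain z where "z \<in> blk D" using blk_ne by blast
    thus ?thesis using XX_at[OF True, of _ f] XX_at[OF True, of _ f'] assms(3) by metis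
  qed (use assms in auto)
qed

lemma lcos_inv_cancel:
  assumes "k \<in> H" "D \<in> QQ" shows "inv k <# (k <# D) = D" "k <# (inv k <# D) = D"
proof -
  have kc: "k \<in> carrier G" using assms(1) by (rule Hc)
  have Dc: "D \<subseteq> carrier G" using assms(2) by (rule QQ_c)
  show "inv k <# (k <# D) = D" using kc Dc by (simp add: lcos_m_assoc lcos_mult_one)
  show "k <# (inv k <# D) = D" using kc Dc by (simp add: lcos_m_assoc lcos_mult_one)
qed

lemma act_formula:
  assumes k: "k \<in> H"
  shows "act k f = (\<lambda>D. if D \<in> QQ then f (inv k <# D) else 0)"
proof
  fix D
  show "act k f D = (if D \<in> QQ then f (inv k <# D) else 0)"
  proof (cases "D \<in> QQ")
    case True
    have "{B \<in> QQ. k <# B = D} = {inv k <# D}"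
      using lcos_inv_cancel[OF k] lQQ[OF Hi[OF k] True] True by auto
    thus ?thesis using True by (simp add: act_def coset_lmult_def)
  next
    case False
    have e: "{B \<in> QQ. k <# B = D} = {}" using lQQ[OF k] False by auto
    show ?thesis unfolding act_def coset_lmult_def e using False by simp
  qed
qed

lemma bij_l: "k \<in> H \<Longrightarrow> bij_betw (\<lambda>D. k <# D) QQ QQ"
  by (rule bij_betw_byWitness[where f' = "\<lambda>D. inv k <# D"])
     (auto simp: lcos_inv_cancel lQQ Hi)

lemma act_sum: "k \<in> H \<Longrightarrow> sum (act k f) QQ = sum f QQ"
proof -
  assume k: "k \<in> H"
  have "sum (act k f) QQ = (\<Sum>D\<in>QQ. f (inv k <# D))" by (simp add: act_formula[OF k])
  also have "\<dots> = sum f QQ"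
    using sum.reindex_bij_betw[OF bij_l[OF Hi[OF k]], of f] .
  finally show ?thesis .
qed

lemma act_comp: "k \<in> H \<Longrightarrow> k' \<in> H \<Longrightarrow> act k (act k' f) = act (k \<otimes> k') f"
proof -
  assume k: "k \<in> H" and k': "k' \<in> H"
  have kc: "k \<in> carrier G" "k' \<in> carrier G" using k k' Hc by auto
  have "inv k' <# (inv k <# D) = inv (k \<otimes> k') <# D" if "D \<in> QQ" for D
    using kc QQ_c[OF that] by (simp add: lcos_m_assoc inv_mult_group)
  thus ?thesis using k k' lQQ[OF Hi[OF k]] by (auto simp: act_formula Hm)
qed

lemma act_one: "\<forall>q. q \<notin> QQ \<longrightarrow> f q = 0 \<Longrightarrow> act \<one> f = f"
  by (rule ext) (auto simp: act_formula[OF H1] lcos_mult_one[OF QQ_c])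

lemma act_add: "k \<in> H \<Longrightarrow> act k (\<lambda>D. f D + f' D) = (\<lambda>D. act k f D + act k f' D)"
  by (auto simp: act_formula intro!: ext)

lemma act_neg: "k \<in> H \<Longrightarrow> act k (\<lambda>D. - f D) = (\<lambda>D. - act k f D)"
  by (auto simp: act_formula intro!: ext)

lemma act_zero: "k \<in> H \<Longrightarrow> act k (\<lambda>D. 0) = (\<lambda>D. 0)"
  by (simp add: act_formula)

lemma act_supp: "k \<in> H \<Longrightarrow> \<forall>q. q \<notin> QQ \<longrightarrow> act k f q = 0"
  by (simp add: act_formula)

lemma isaug_act: "k \<in> H \<Longrightarrow> isaug f \<Longrightarrow> isaug (act k f)"
  unfolding isaug_def using act_supp act_sum by simp

lemma isaug_add: "isaug f \<Longrightarrow> isaug f' \<Longrightarrow> isaug (\<lambda>D. f D + f' D)"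
  unfolding isaug_def by (simp add: sum.distrib)

lemma isaug_neg: "isaug f \<Longrightarrow> isaug (\<lambda>D. - f D)"
  unfolding isaug_def by (simp add: sum_negf)

lemma isaug_zero: "isaug (\<lambda>D. 0)"
  unfolding isaug_def by simp

lemma basis_XX:
  assumes k: "k \<in> H"
  shows "gr_mult G (gr_basis G k) (XX f) = XX (act k f)"
proof
  fix z
  show "gr_mult G (gr_basis G k) (XX f) z = XX (act k f) z"
  proof (cases "z \<in> carrier G")
    case z: True
    have kc: "k \<in> carrier G" using k by (rule Hc)
    have "gr_mult G (gr_basis G k) (XX f) z = XX f (inv k \<otimes> z)"
      using gm_basis_l[OF kc z] .
    also have "\<dots> = (\<Sum>D\<in>QQ. f D * (if z \<in> blk (k <# D) then 1 else 0))"
      using z kc by (auto simp: XX_def blk_ltr[OF z kc QQ_c] intro!: sum.cong)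
    also have "\<dots> = (\<Sum>D\<in>QQ. f (inv k <# (k <# D)) * (if z \<in> blk (k <# D) then 1 else 0))"
      by (auto simp: lcos_inv_cancel[OF k] intro!: sum.cong)
    also have "\<dots> = (\<Sum>D\<in>QQ. f (inv k <# D) * (if z \<in> blk D then 1 else 0))"
      using sum.reindex_bij_betw[OF bij_l[OF k], of "\<lambda>D. f (inv k <# D) * (if z \<in> blk D then 1 else 0)"] .
    also have "\<dots> = XX (act k f) z"
      using z by (simp add: XX_def act_formula[OF k])
    finally show ?thesis .
  qed (simp add: gm_out XX_out)
qed

lemma XX_basis:
  assumes k: "k \<in> H"
  shows "gr_mult G (XX f) (gr_basis G k) = XX f"
proof
  fix z
  show "gr_mult G (XX f) (gr_basis G k) z = XX f z"
  proof (cases "z \<in> carrier G")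
    case z: True
    have kc: "k \<in> carrier G" using k by (rule Hc)
    show ?thesis using gm_basis_r[OF kc z] XX_rinv[OF z Hi[OF k]] by simp
  qed (simp add: gm_out XX_out)
qed

lemma bij_zinv: "z \<in> carrier G \<Longrightarrow> bij_betw (\<lambda>v. z \<otimes> inv v) (carrier G) (carrier G)"
  by (rule bij_betw_byWitness[where f' = "\<lambda>u. inv u \<otimes> z"])
     (auto simp: inv_mult_group m_assoc cancel1)

lemma XX_XX:
  assumes s: "sum f' QQ = 0"
  shows "gr_mult G (XX f) (XX f') = (\<lambda>_. 0)"
proof
  fix z
  show "gr_mult G (XX f) (XX f') z = 0"
  proof (cases "z \<in> carrier G")
    case z: True
    define S where "S D = (\<Sum>v\<in>carrier G. XX f (z \<otimes> inv v) * (if v \<in> blk D then 1 else 0))" for D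
    have "gr_mult G (XX f) (XX f') z = (\<Sum>u\<in>carrier G. XX f u * XX f' (inv u \<otimes> z))"
      using gm_in[OF z] .
    also have "\<dots> = (\<Sum>v\<in>carrier G. XX f (z \<otimes> inv v) * XX f' (inv (z \<otimes> inv v) \<otimes> z))"
      using sum.reindex_bij_betw[OF bij_zinv[OF z], of "\<lambda>u. XX f u * XX f' (inv u \<otimes> z)"] by simp
    also have "\<dots> = (\<Sum>v\<in>carrier G. XX f (z \<otimes> inv v) * XX f' v)"
      using z by (intro sum.cong) (auto simp: inv_mult_group m_assoc cancel2)
    also have "\<dots> = (\<Sum>v\<in>carrier G. \<Sum>D\<in>QQ. f' D * (XX f (z \<otimes> inv v) * (if v \<in> blk D then 1 else 0)))"
    proof (rule sum.cong[OF refl])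
      fix v assume v: "v \<in> carrier G"
      have "XX f' v = (\<Sum>D\<in>QQ. f' D * (if v \<in> blk D then 1 else 0))" using v by (simp add: XX_def)
      thus "XX f (z \<otimes> inv v) * XX f' v = (\<Sum>D\<in>QQ. f' D * (XX f (z \<otimes> inv v) * (if v \<in> blk D then 1 else 0)))"
        by (simp add: sum_distrib_left mult_ac)
    qed
    also have "\<dots> = (\<Sum>D\<in>QQ. f' D * S D)"
      by (subst sum.swap) (simp add: S_def sum_distrib_left)
    also have "\<dots> = (\<Sum>D\<in>QQ. f' D * S CC)"
    proof (rule sum.cong[OF refl])
      fix D assume "D \<in> QQ"
      then obtain h where h: "h \<in> H" "D = h <# CC" using QQ_mem by auto
      have hc: "h \<in> carrier G" using h(1) by (rule Hc)
      have "S D = (\<Sum>w\<in>carrier G. XX f (z \<otimes> inv (h \<otimes> w)) * (if h \<otimes> w \<in> blk D then 1 else 0))"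
        unfolding S_def using sum.reindex_bij_betw[OF bij_lmult[OF hc], of "\<lambda>v. XX f (z \<otimes> inv v) * (if v \<in> blk D then 1 else 0)"]
        by simp
      also have "\<dots> = S CC"
        unfolding S_def
      proof (rule sum.cong[OF refl])
        fix w assume w: "w \<in> carrier G"
        have "XX f (z \<otimes> inv (h \<otimes> w)) = XX f ((z \<otimes> inv w) \<otimes> inv h)"
          using z w hc by (simp add: inv_mult_group m_assoc)
        also have "\<dots> = XX f (z \<otimes> inv w)" using XX_rinv[of "z \<otimes> inv w" "inv h"] z w Hi[OF h(1)] by simp
        finally have 1: "XX f (z \<otimes> inv (h \<otimes> w)) = XX f (z \<otimes> inv w)" .
        have "(h \<otimes> w \<in> blk D) = (inv h \<otimes> (h \<otimes> w) \<in> blk CC)"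
          unfolding h(2) using blk_ltr[OF _ hc CC_c] hc w by simp
        also have "\<dots> = (w \<in> blk CC)" using hc w by (simp add: cancel2)
        finally have 2: "(h \<otimes> w \<in> blk D) = (w \<in> blk CC)" .
        show "XX f (z \<otimes> inv (h \<otimes> w)) * (if h \<otimes> w \<in> blk D then 1 else 0) =
              XX f (z \<otimes> inv w) * (if w \<in> blk CC then 1 else 0)" using 1 2 by simp
      qed
      finally show "f' D * S D = f' D * S CC" by simp
    qed
    also have "\<dots> = 0" using s by (simp add: sum_distrib_right[symmetric])
    finally show ?thesis .
  qed (simp add: gm_out)
qed

end


context zg begin

definition "Ph f k = gr_add (gr_basis G k) (XX (act k f))"
definition "dd h = (\<lambda>B. (if B = CC then 1 else 0) - (if B = h <# CC then 1 else (0::int)))"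

lemma Ph_ring: "Ph f k \<in> grp_ring G"
  unfolding Ph_def by (rule add_ring[OF basis_ring XX_ring])

lemma Ph_mult:
  assumes s: "sum f' QQ = 0" and k: "k \<in> H" and k': "k' \<in> H"
  shows "gr_mult G (Ph f k) (Ph f' k') = Ph (\<lambda>D. act (inv k') f D + f' D) (k \<otimes> k')"
proof -
  have kc: "k \<in> carrier G" "k' \<in> carrier G" using k k' Hc by auto
  have s': "sum (act k' f') QQ = 0" using act_sum[OF k'] s by simp
  have e1: "act (k \<otimes> k') (act (inv k') f) = act k f"
  proof -
    have "act (k \<otimes> k') (act (inv k') f) = act (k \<otimes> k' \<otimes> inv k') f"
      using act_comp[OF Hm[OF k k'] Hi[OF k']] .
    also have "k \<otimes> k' \<otimes> inv k' = k" using kc by (simp add: m_assoc)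
    finally show ?thesis .
  qed
  have "gr_mult G (Ph f k) (Ph f' k') =
     gr_add (gr_add (gr_mult G (gr_basis G k) (gr_basis G k')) (gr_mult G (XX (act k f)) (gr_basis G k')))
            (gr_add (gr_mult G (gr_basis G k) (XX (act k' f'))) (gr_mult G (XX (act k f)) (XX (act k' f'))))"
    unfolding Ph_def gm_add_l gm_add_r ..
  also have "\<dots> = gr_add (gr_add (gr_basis G (k \<otimes> k')) (XX (act k f))) (gr_add (XX (act (k \<otimes> k') f')) (\<lambda>_. 0))"
    using basis_mult[OF kc] basis_XX[OF k] act_comp[OF k k'] XX_basis[OF k'] XX_XX[OF s'] by simp
  also have "\<dots> = Ph (\<lambda>D. act (inv k') f D + f' D) (k \<otimes> k')"
    unfolding Ph_def act_add[OF Hm[OF k k']] XX_add e1 by (rule ext) (simp add: gr_add_def)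
  finally show ?thesis .
qed

lemma Ph_zero: "k \<in> H \<Longrightarrow> Ph (\<lambda>_. 0) k = gr_basis G k"
  unfolding Ph_def by (simp add: act_zero XX_zero gr_add_def)

lemma Ph_one: "Ph (\<lambda>_. 0) \<one> = gr_one G"
  using Ph_zero[OF H1] by (simp add: gr_one_def)

lemma Ph_1: "isaug f \<Longrightarrow> Ph f \<one> = gr_add (gr_one G) (XX f)"
  unfolding Ph_def gr_one_def isaug_def by (simp add: act_one)

lemma Ph_r:
  assumes f: "isaug f" and k: "k \<in> H"
  shows "gr_mult G (Ph f k) (Ph (\<lambda>D. - act k f D) (inv k)) = gr_one G"
proof -
  have "sum (\<lambda>D. - act k f D) QQ = 0" using f act_sum[OF k] by (simp add: isaug_def sum_negf)
  hence "gr_mult G (Ph f k) (Ph (\<lambda>D. - act k f D) (inv k)) = Ph (\<lambda>D. act (inv (inv k)) f D + - act k f D) (k \<otimes> inv k)"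
    using Ph_mult k Hi[OF k] by blast
  also have "\<dots> = Ph (\<lambda>_. 0) \<one>" using Hc[OF k] by simp
  finally show ?thesis using Ph_one by simp
qed

lemma Ph_l:
  assumes f: "isaug f" and k: "k \<in> H"
  shows "gr_mult G (Ph (\<lambda>D. - act k f D) (inv k)) (Ph f k) = gr_one G"
proof -
  have "sum f QQ = 0" using f by (simp add: isaug_def)
  hence "gr_mult G (Ph (\<lambda>D. - act k f D) (inv k)) (Ph f k) = Ph (\<lambda>D. act (inv k) (\<lambda>D. - act k f D) D + f D) (inv k \<otimes> k)"
    using Ph_mult k Hi[OF k] by blast
  also have "act (inv k) (\<lambda>D. - act k f D) = (\<lambda>D. - f D)"
    using act_neg[OF Hi[OF k]] act_comp[OF Hi[OF k] k] act_one f Hc[OF k] by (simp add: isaug_def)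
  also have "Ph (\<lambda>D. (\<lambda>D. - f D) D + f D) (inv k \<otimes> k) = Ph (\<lambda>_. 0) \<one>" using Hc[OF k] by simp
  finally show ?thesis using Ph_one by simp
qed

lemma Ph_units: "isaug f \<Longrightarrow> k \<in> H \<Longrightarrow> Ph f k \<in> carrier (units_ZG G)"
proof -
  assume f: "isaug f" and k: "k \<in> H"
  have "Ph (\<lambda>D. - act k f D) (inv k) \<in> grp_ring G" by (rule Ph_ring)
  thus ?thesis unfolding units_ZG_def using Ph_r[OF f k] Ph_l[OF f k] Ph_ring by auto
qed

lemma Ph_inv: "isaug f \<Longrightarrow> k \<in> H \<Longrightarrow> inv\<^bsub>units_ZG G\<^esub> (Ph f k) = Ph (\<lambda>D. - act k f D) (inv k)"
  using group.inv_equality[OF units_group, of "Ph (\<lambda>D. - act k f D) (inv k)" "Ph f k"]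
    Ph_l Ph_units isaug_neg isaug_act Hi by (simp add: units_ZG_def)

lemma Ph_inj:
  assumes f: "isaug f" and f': "isaug f'" and k: "k \<in> H" and k': "k' \<in> H" and e: "Ph f k = Ph f' k'"
  shows "f = f' \<and> k = k'"
proof -
  have kc: "k \<in> carrier G" "k' \<in> carrier G" using k k' Hc by auto
  define Y where "Y = XX (act k f)"
  define Y' where "Y' = XX (act k' f')"
  have ev: "gr_basis G k z + Y z = gr_basis G k' z + Y' z" for z
    using fun_cong[OF e, of z] unfolding Ph_def Y_def Y'_def gr_add_def .
  have kk: "k = k'"
  proof (rule ccontr)
    assume ne: "k \<noteq> k'"
    have "Y k' = Y (k \<otimes> (inv k \<otimes> k'))" using kc by (simp add: cancel1)
    also have "\<dots> = Y k" unfolding Y_def using XX_rinv[OF kc(1) Hm[OF Hi[OF k] k']] .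
    finally have 1: "Y k' = Y k" .
    have "Y' k = Y' (k' \<otimes> (inv k' \<otimes> k))" using kc by (simp add: cancel1)
    also have "\<dots> = Y' k'" unfolding Y'_def using XX_rinv[OF kc(2) Hm[OF Hi[OF k'] k]] .
    finally have 2: "Y' k = Y' k'" .
    have "1 + Y k = Y' k" using ev[of k] ne kc by (simp add: gr_basis_def)
    moreover have "Y k' = 1 + Y' k'" using ev[of k'] ne kc by (simp add: gr_basis_def)
    ultimately show False using 1 2 by simp
  qed
  have "Y = Y'" using ev kk by (intro ext) simp
  hence "act k f = act k f'" using XX_inj act_supp[OF k] act_supp[OF k'] kk
    unfolding Y_def Y'_def by metis
  hence "act (inv k) (act k f) = act (inv k) (act k f')" by simp
  hence "f = f'" using act_comp[OF Hi[OF k] k] act_one f f' kc by (simp add: isaug_def)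
  thus ?thesis using kk by simp
qed

lemma dd_aug: "h \<in> H \<Longrightarrow> isaug (dd h)"
  unfolding isaug_def dd_def using CC_QQ hCC_QQ finQQ by (auto simp: sum_subtractf)

lemma XX_dd:
  assumes h: "h \<in> H"
  shows "XX (dd h) = gr_diff (gr_mult G (gr_basis G (inv g)) (gr_tilde G H)) (gr_mult G (gr_basis G (h \<otimes> inv g)) (gr_tilde G H))"
proof
  fix z
  have hc: "h \<in> carrier G" using h by (rule Hc)
  show "XX (dd h) z = gr_diff (gr_mult G (gr_basis G (inv g)) (gr_tilde G H)) (gr_mult G (gr_basis G (h \<otimes> inv g)) (gr_tilde G H)) z"
  proof (cases "z \<in> carrier G")
    case z: True
    have "XX (dd h) z = (\<Sum>D\<in>QQ. dd h D * (if z \<in> blk D then 1 else 0))" using z by (simp add: XX_def)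
    also have "\<dots> = (\<Sum>D\<in>QQ. (if D = CC then (if z \<in> blk CC then 1 else 0) else 0))
        - (\<Sum>D\<in>QQ. (if D = h <# CC then (if z \<in> blk (h <# CC) then 1 else 0) else 0))"
      unfolding sum_subtractf[symmetric] by (rule sum.cong) (auto simp: dd_def)
    also have "\<dots> = (if z \<in> blk CC then 1 else 0) - (if z \<in> blk (h <# CC) then 1 else 0)"
      using CC_QQ hCC_QQ[OF h] finQQ by simp
    also have "z \<in> blk CC \<longleftrightarrow> g \<otimes> z \<in> H"
      using blk_rep[OF H1 z] lcos_mult_one[OF CC_c] z by simp
    also have "z \<in> blk (h <# CC) \<longleftrightarrow> g \<otimes> (inv h \<otimes> z) \<in> H"
      using blk_rep[OF h z] .
    finally have 1: "XX (dd h) z = (if g \<otimes> z \<in> H then 1 else 0) - (if g \<otimes> (inv h \<otimes> z) \<in> H then 1 else 0)" .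
    have "inv (h \<otimes> inv g) \<otimes> z = g \<otimes> (inv h \<otimes> z)" using hc gc z by (simp add: inv_mult_group m_assoc)
    thus ?thesis using 1 z hc gc
      by (simp add: gr_diff_def gm_basis_l gr_tilde_def)
  qed (simp add: XX_out gr_diff_def gm_out)
qed

lemma W_dd:
  assumes h: "h \<in> H"
  shows "gr_mult G (gr_mult G (gr_diff (gr_one G) (gr_basis G h)) (gr_basis G (inv g))) (gr_tilde G H) = XX (dd h)"
proof -
  have hc: "h \<in> carrier G" using h by (rule Hc)
  have "gr_mult G (gr_diff (gr_one G) (gr_basis G h)) (gr_basis G (inv g)) = gr_diff (gr_basis G (inv g)) (gr_basis G (h \<otimes> inv g))"
    unfolding gm_diff_l using gm_one_l[OF basis_ring] basis_mult[OF hc inv_closed[OF gc]] by simp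
  thus ?thesis using XX_dd[OF h] by (simp add: gm_diff_l)
qed

lemma bicyc_Ph: "h \<in> H \<Longrightarrow> bicyc_unit G (inv g) H h = Ph (dd h) \<one>"
  unfolding bicyc_unit_def using W_dd Ph_1 dd_aug by simp

lemma psi_Ph: "h \<in> H \<Longrightarrow> psi G (inv g) H h = Ph (act (inv h) (dd h)) h"
proof -
  assume h: "h \<in> H"
  have "act h (act (inv h) (dd h)) = dd h"
    using act_comp[OF h Hi[OF h]] act_one dd_aug[OF h] Hc[OF h] by (simp add: isaug_def)
  thus ?thesis unfolding psi_def Ph_def using W_dd[OF h] by simp
qed

end


lemma iso_set_sym_gen:
  assumes "h \<in> iso G H" and cl: "\<And>x y. x \<in> carrier G \<Longrightarrow> y \<in> carrier G \<Longrightarrow> x \<otimes>\<^bsub>G\<^esub> y \<in> carrier G"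
  shows "inv_into (carrier G) h \<in> iso H G"
proof -
  have h: "h \<in> hom G H" "bij_betw h (carrier G) (carrier H)"
    using assms by (auto simp add: iso_def bij_betw_inv_into)
  then have HG: "bij_betw (inv_into (carrier G) h) (carrier H) (carrier G)"
    by (simp add: bij_betw_inv_into)
  have "inv_into (carrier G) h \<in> hom H G"
    unfolding hom_def
  proof safe
    show *: "\<And>x. x \<in> carrier H \<Longrightarrow> inv_into (carrier G) h x \<in> carrier G"
      by (meson HG bij_betwE)
    show "inv_into (carrier G) h (x \<otimes>\<^bsub>H\<^esub> y) = inv_into (carrier G) h x \<otimes>\<^bsub>G\<^esub> inv_into (carrier G) h y"
      if "x \<in> carrier H" "y \<in> carrier H" for x y
    proof (rule inv_into_f_eq)
      show "inj_on h (carrier G)"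
        using bij_betw_def h(2) by blast
      show "inv_into (carrier G) h x \<otimes>\<^bsub>G\<^esub> inv_into (carrier G) h y \<in> carrier G"
        using cl * that by blast
      show "h (inv_into (carrier G) h x \<otimes>\<^bsub>G\<^esub> inv_into (carrier G) h y) = x \<otimes>\<^bsub>H\<^esub> y"
        using h bij_betw_inv_into_right [of h] unfolding hom_def by (simp add: "*" that)
    qed
  qed
  then show ?thesis
    by (simp add: Group.iso_def bij_betw_inv_into h)
qed

context zg begin

abbreviation "UZ \<equiv> units_ZG G"

lemma UZ_one: "\<one>\<^bsub>UZ\<^esub> = gr_one G" by (simp add: units_ZG_def)
lemma UZ_mult: "x \<otimes>\<^bsub>UZ\<^esub> y = gr_mult G x y" by (simp add: units_ZG_def)

lemma isaug_scale: "isaug f \<Longrightarrow> isaug (\<lambda>B. c * f B)"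
  unfolding isaug_def by (simp add: sum_distrib_left[symmetric])

lemma U_mult: "isaug f \<Longrightarrow> isaug f' \<Longrightarrow> gr_mult G (Ph f \<one>) (Ph f' \<one>) = Ph (\<lambda>D. f D + f' D) \<one>"
  using Ph_mult[OF _ H1 H1, of f' f] act_one by (simp add: isaug_def)

lemma U_inv: "isaug f \<Longrightarrow> inv\<^bsub>UZ\<^esub> (Ph f \<one>) = Ph (\<lambda>D. - f D) \<one>"
  using Ph_inv[OF _ H1, of f] act_one by (simp add: isaug_def)

lemma gen_aug:
  assumes Sg: "subgroup Sg UZ" and gens: "\<And>h. h \<in> H \<Longrightarrow> Ph (dd h) \<one> \<in> Sg" and f: "isaug f"
  shows "Ph f \<one> \<in> Sg"
proof -
  interpret UG: group UZ by (rule units_group)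
  have scal_nat: "Ph (\<lambda>B. int n * dd h B) \<one> \<in> Sg" if h: "h \<in> H" for h n
  proof (induction n)
    case 0
    show ?case using subgroup.one_closed[OF Sg] Ph_one by (simp add: UZ_one)
  next
    case (Suc n)
    have "Ph (\<lambda>B. int (Suc n) * dd h B) \<one> = gr_mult G (Ph (dd h) \<one>) (Ph (\<lambda>B. int n * dd h B) \<one>)"
      using U_mult[OF dd_aug[OF h] isaug_scale[OF dd_aug[OF h]], of "int n"] by (simp add: algebra_simps)
    thus ?case using subgroup.m_closed[OF Sg gens[OF h] Suc] by (simp add: UZ_mult)
  qed
  have scal: "Ph (\<lambda>B. c * dd h B) \<one> \<in> Sg" if h: "h \<in> H" for h c
  proof (cases "c \<ge> 0")
    case True
    then obtain n where "c = int n" using nonneg_eq_int by blast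
    thus ?thesis using scal_nat[OF h] by simp
  next
    case False
    then obtain n where c: "c = - int n" by (metis minus_minus nonneg_eq_int neg_0_le_iff_le linorder_not_le less_imp_le)
    have "inv\<^bsub>UZ\<^esub> (Ph (\<lambda>B. int n * dd h B) \<one>) \<in> Sg" using subgroup.m_inv_closed[OF Sg scal_nat[OF h]] .
    thus ?thesis using U_inv[OF isaug_scale[OF dd_aug[OF h]], of "int n"] c by simp
  qed
  define ddD where "ddD D = (\<lambda>B. (if B = CC then 1 else 0) - (if B = D then 1 else (0::int)))" for D
  have ddD: "D \<in> QQ \<Longrightarrow> \<exists>h\<in>H. ddD D = dd h" for D
    unfolding QQ_mem ddD_def dd_def by auto
  have comb: "isaug (\<lambda>B. \<Sum>D\<in>A. c D * ddD D B) \<and> Ph (\<lambda>B. \<Sum>D\<in>A. c D * ddD D B) \<one> \<in> Sg"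
    if "finite A" "A \<subseteq> QQ" for A c
    using that
  proof (induction A rule: finite_induct)
    case empty
    show ?case using isaug_zero subgroup.one_closed[OF Sg] Ph_one by (simp add: UZ_one)
  next
    case (insert D A)
    obtain h where h: "h \<in> H" "ddD D = dd h" using ddD insert.prems by blast
    have a1: "isaug (\<lambda>B. c D * ddD D B)" using isaug_scale[OF dd_aug[OF h(1)]] h(2) by simp
    have IH: "isaug (\<lambda>B. \<Sum>D\<in>A. c D * ddD D B)" "Ph (\<lambda>B. \<Sum>D\<in>A. c D * ddD D B) \<one> \<in> Sg"
      using insert by auto
    have e: "(\<lambda>B. \<Sum>D\<in>insert D A. c D * ddD D B) = (\<lambda>B. c D * ddD D B + (\<Sum>D\<in>A. c D * ddD D B))"
      using insert by simp
    have "Ph (\<lambda>B. c D * ddD D B) \<one> \<in> Sg" using scal[OF h(1)] h(2) by simp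
    hence "gr_mult G (Ph (\<lambda>B. c D * ddD D B) \<one>) (Ph (\<lambda>B. \<Sum>D\<in>A. c D * ddD D B) \<one>) \<in> Sg"
      using subgroup.m_closed[OF Sg _ IH(2)] by (simp add: UZ_mult)
    thus ?case unfolding e using U_mult[OF a1 IH(1)] isaug_add[OF a1 IH(1)] by simp
  qed
  have rep: "f = (\<lambda>B. \<Sum>D\<in>QQ. (- f D) * ddD D B)"
  proof
    fix B
    have "(\<Sum>D\<in>QQ. (- f D) * ddD D B) = (\<Sum>D\<in>QQ. (if D = B then f D else 0)) - (\<Sum>D\<in>QQ. f D * (if B = CC then 1 else 0))"
      unfolding sum_subtractf[symmetric] by (rule sum.cong) (auto simp: ddD_def algebra_simps)
    also have "\<dots> = f B"
      using f finQQ unfolding isaug_def by (simp add: sum_distrib_right[symmetric])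
    finally show "f B = (\<Sum>D\<in>QQ. (- f D) * ddD D B)" by simp
  qed
  show ?thesis using comb[OF finQQ subset_refl, of "\<lambda>D. - f D"] rep by simp
qed

end


context zg begin

definition "gens = gr_basis G ` H \<union> psi G (inv g) H ` H"
definition "gen = generate UZ gens"
definition "SD = semidirect_r (aug_ideal QQ) (G\<lparr>carrier := H\<rparr>) (\<lambda>h f. coset_lmult G QQ (inv h) f)"
definition "img = (\<lambda>(f,k). Ph f k) ` ({f. isaug f} \<times> H)"

lemma aug_carrier: "carrier (aug_ideal QQ) = {f. isaug f}"
  by (auto simp: aug_ideal_def isaug_def)

lemma SD_carrier: "carrier SD = {f. isaug f} \<times> H"
  by (simp add: SD_def semidirect_r_def aug_carrier)

lemma SD_mult: "(f,k) \<otimes>\<^bsub>SD\<^esub> (f',k') = (\<lambda>q. act (inv k') f q + f' q, k \<otimes> k')"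
  by (simp add: SD_def semidirect_r_def aug_ideal_def act_def)

lemma basis_Ph: "h \<in> H \<Longrightarrow> gr_basis G h = Ph (\<lambda>_. 0) h"
  using Ph_zero by simp

lemma gens_img: "gens \<subseteq> img"
proof
  fix x assume "x \<in> gens"
  then obtain h where h: "h \<in> H" "x = gr_basis G h \<or> x = psi G (inv g) H h" unfolding gens_def by auto
  show "x \<in> img"
  proof (cases "x = gr_basis G h")
    case True
    thus ?thesis unfolding img_def using h(1) basis_Ph[OF h(1)] isaug_zero
      by (auto intro!: image_eqI[of _ _ "(\<lambda>_. 0, h)"])
  next
    case False
    hence "x = Ph (act (inv h) (dd h)) h" using h psi_Ph by auto
    thus ?thesis unfolding img_def using h(1) isaug_act[OF Hi[OF h(1)] dd_aug[OF h(1)]]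
      by (auto intro!: image_eqI[of _ _ "(act (inv h) (dd h), h)"])
  qed
qed

lemma img_units: "img \<subseteq> carrier UZ"
  unfolding img_def using Ph_units by auto

lemma img_sub: "subgroup img UZ"
proof -
  interpret UG: group UZ by (rule units_group)
  show ?thesis
  proof (rule UG.subgroupI)
    show "img \<subseteq> carrier UZ" by (rule img_units)
    show "img \<noteq> {}" unfolding img_def using isaug_zero H1 by auto
    show "inv\<^bsub>UZ\<^esub> a \<in> img" if "a \<in> img" for a
    proof -
      obtain f k where fk: "isaug f" "k \<in> H" "a = Ph f k" using \<open>a \<in> img\<close> unfolding img_def by auto
      have "inv\<^bsub>UZ\<^esub> a = Ph (\<lambda>D. - act k f D) (inv k)" using Ph_inv fk by simp
      thus ?thesis unfolding img_def using isaug_neg[OF isaug_act[OF fk(2) fk(1)]] Hi[OF fk(2)]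
        by (auto intro!: image_eqI[of _ _ "(\<lambda>D. - act k f D, inv k)"])
    qed
    show "a \<otimes>\<^bsub>UZ\<^esub> b \<in> img" if "a \<in> img" "b \<in> img" for a b
    proof -
      obtain f k where fk: "isaug f" "k \<in> H" "a = Ph f k" using \<open>a \<in> img\<close> unfolding img_def by auto
      obtain f' k' where fk': "isaug f'" "k' \<in> H" "b = Ph f' k'" using \<open>b \<in> img\<close> unfolding img_def by auto
      have "a \<otimes>\<^bsub>UZ\<^esub> b = Ph (\<lambda>D. act (inv k') f D + f' D) (k \<otimes> k')"
        using Ph_mult[of f' k k' f] fk fk' by (simp add: UZ_mult isaug_def)
      moreover have "isaug (\<lambda>D. act (inv k') f D + f' D)"
        using isaug_add[OF isaug_act[OF Hi[OF fk'(2)] fk(1)] fk'(1)] .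
      ultimately show ?thesis unfolding img_def using Hm[OF fk(2) fk'(2)]
        by (auto intro!: image_eqI[of _ _ "(\<lambda>D. act (inv k') f D + f' D, k \<otimes> k')"])
    qed
  qed
qed

lemma gens_units: "gens \<subseteq> carrier UZ"
  using gens_img img_units by auto

lemma gen_sub: "subgroup gen UZ"
  unfolding gen_def using group.generate_is_subgroup[OF units_group gens_units] .

lemma gen_img: "gen \<subseteq> img"
  unfolding gen_def using group.generate_subgroup_incl[OF units_group gens_img img_sub] .

lemma dd_gen: "h \<in> H \<Longrightarrow> Ph (dd h) \<one> \<in> gen"
proof -
  assume h: "h \<in> H"
  have hc: "h \<in> carrier G" using h by (rule Hc)
  have i: "inv\<^bsub>UZ\<^esub> (gr_basis G h) = Ph (\<lambda>_. 0) (inv h)"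
    using Ph_inv[OF isaug_zero h] basis_Ph[OF h] act_zero[OF h] by simp
  have "gr_mult G (Ph (act (inv h) (dd h)) h) (Ph (\<lambda>_. 0) (inv h)) = Ph (\<lambda>D. act (inv (inv h)) (act (inv h) (dd h)) D + 0) (h \<otimes> inv h)"
    using Ph_mult[OF _ h Hi[OF h]] by simp
  also have "act (inv (inv h)) (act (inv h) (dd h)) = dd h"
    using act_comp[OF h Hi[OF h]] act_one dd_aug[OF h] hc by (simp add: isaug_def)
  finally have e: "gr_mult G (psi G (inv g) H h) (inv\<^bsub>UZ\<^esub> (gr_basis G h)) = Ph (dd h) \<one>"
    using psi_Ph[OF h] i hc by simp
  have "psi G (inv g) H h \<in> gen" unfolding gen_def gens_def using h by (auto intro: generate.incl)
  moreover have "inv\<^bsub>UZ\<^esub> (gr_basis G h) \<in> gen" unfolding gen_def gens_def using h by (auto intro: generate.inv)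
  ultimately have "psi G (inv g) H h \<otimes>\<^bsub>UZ\<^esub> inv\<^bsub>UZ\<^esub> (gr_basis G h) \<in> gen"
    unfolding gen_def by (rule generate.eng)
  thus ?thesis using e by (simp add: UZ_mult)
qed

lemma img_gen: "img \<subseteq> gen"
proof
  fix x assume "x \<in> img"
  then obtain f k where fk: "isaug f" "k \<in> H" "x = Ph f k" unfolding img_def by auto
  have kc: "k \<in> carrier G" using fk(2) by (rule Hc)
  have "gr_mult G (Ph (act k f) \<one>) (Ph (\<lambda>_. 0) k) = Ph (\<lambda>D. act (inv k) (act k f) D + 0) (\<one> \<otimes> k)"
    using Ph_mult[OF _ H1 fk(2)] by simp
  also have "act (inv k) (act k f) = f"
    using act_comp[OF Hi[OF fk(2)] fk(2)] act_one fk(1) kc by (simp add: isaug_def)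
  finally have e: "gr_mult G (Ph (act k f) \<one>) (gr_basis G k) = x" using fk kc basis_Ph[OF fk(2)] by simp
  have "Ph (act k f) \<one> \<in> gen" using gen_aug[OF gen_sub dd_gen isaug_act[OF fk(2) fk(1)]] .
  moreover have "gr_basis G k \<in> gen" unfolding gen_def gens_def using fk(2) by (auto intro: generate.incl)
  ultimately have "Ph (act k f) \<one> \<otimes>\<^bsub>UZ\<^esub> gr_basis G k \<in> gen" unfolding gen_def by (rule generate.eng)
  thus "x \<in> gen" using e by (simp add: UZ_mult)
qed

lemma gen_eq: "gen = img"
  using gen_img img_gen by auto

lemma part1_iso: "(\<lambda>(f,k). Ph f k) \<in> iso SD (UZ\<lparr>carrier := gen\<rparr>)"
proof (rule isoI)
  show "(\<lambda>(f,k). Ph f k) \<in> hom SD (UZ\<lparr>carrier := gen\<rparr>)"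
    unfolding hom_def
  proof (intro CollectI conjI ballI)
    show "(\<lambda>(f,k). Ph f k) \<in> carrier SD \<rightarrow> carrier (UZ\<lparr>carrier := gen\<rparr>)"
      using gen_eq unfolding SD_carrier img_def by auto
    fix x y assume xy: "x \<in> carrier SD" "y \<in> carrier SD"
    obtain f k f' k' where x: "x = (f,k)" and y: "y = (f',k')" by (cases x, cases y) auto
    have fk: "isaug f" "k \<in> H" "isaug f'" "k' \<in> H"
      using xy unfolding x y SD_carrier by auto
    show "(case x \<otimes>\<^bsub>SD\<^esub> y of (f, k) \<Rightarrow> Ph f k) =
          (case x of (f, k) \<Rightarrow> Ph f k) \<otimes>\<^bsub>UZ\<lparr>carrier := gen\<rparr>\<^esub> (case y of (f, k) \<Rightarrow> Ph f k)"
      unfolding x y using Ph_mult[of f' k k' f] fk by (simp add: SD_mult units_ZG_def isaug_def)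
  qed
  show "bij_betw (\<lambda>(f,k). Ph f k) (carrier SD) (carrier (UZ\<lparr>carrier := gen\<rparr>))"
    unfolding bij_betw_def
  proof
    show "inj_on (\<lambda>(f,k). Ph f k) (carrier SD)"
      unfolding inj_on_def SD_carrier using Ph_inj by auto
    show "(\<lambda>(f,k). Ph f k) ` carrier SD = carrier (UZ\<lparr>carrier := gen\<rparr>)"
      using gen_eq unfolding SD_carrier img_def by simp
  qed
qed

lemma SD_closed: "x \<in> carrier SD \<Longrightarrow> y \<in> carrier SD \<Longrightarrow> x \<otimes>\<^bsub>SD\<^esub> y \<in> carrier SD"
  unfolding SD_carrier using SD_mult isaug_add isaug_act Hi Hm by auto

theorem part1: "UZ\<lparr>carrier := gen\<rparr> \<cong> SD"
  using is_isoI[OF iso_set_sym_gen[OF part1_iso SD_closed]] .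

end


lemma aug_free:
  fixes Q :: "'c set"
  assumes fin: "finite Q" and c: "c0 \<in> Q"
  shows "aug_ideal Q \<cong> free_Abelian_group {..<card Q - 1}"
proof -
  define R where "R = Q - {c0}"
  define n where "n = card Q - 1"
  have finR: "finite R" using fin R_def by simp
  have cR: "card R = n" unfolding R_def n_def using fin c by simp
  obtain e where e: "bij_betw e {0..<n} R" using ex_bij_betw_nat_finite[OF finR] cR by metis
  have eR: "i < n \<Longrightarrow> e i \<in> R" for i using e bij_betwE by fastforce
  define F where "F f = Abs_poly_mapping (\<lambda>i. if i < n then f (e i) else (0::int))" for f :: "'c \<Rightarrow> int"
  have finsupp: "finite {i. (if i < n then f (e i) else (0::int)) \<noteq> 0}" for f :: "'c \<Rightarrow> int"
    by (rule finite_subset[of _ "{..<n}"]) auto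
  have lkF: "Poly_Mapping.lookup (F f) = (\<lambda>i. if i < n then f (e i) else 0)" for f :: "'c \<Rightarrow> int"
    unfolding F_def by (rule lookup_Abs_poly_mapping[OF finsupp])
  have sumQ: "sum f Q = f c0 + sum f R" for f :: "'c \<Rightarrow> int"
    unfolding R_def using fin c by (simp add: sum.remove)
  have sumR: "sum f R = (\<Sum>i<n. f (e i))" for f :: "'c \<Rightarrow> int"
    using sum.reindex_bij_betw[OF e, of f] by (simp add: atLeast0LessThan)
  have "F \<in> iso (aug_ideal Q) (free_Abelian_group {..<n})"
  proof (rule isoI)
    show "F \<in> hom (aug_ideal Q) (free_Abelian_group {..<n})"
      unfolding hom_def
    proof (intro CollectI conjI ballI)
      show "F \<in> carrier (aug_ideal Q) \<rightarrow> carrier (free_Abelian_group {..<n})"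
        by (auto simp: in_keys_iff lkF split: if_splits)
      show "F (x \<otimes>\<^bsub>aug_ideal Q\<^esub> y) = F x \<otimes>\<^bsub>free_Abelian_group {..<n}\<^esub> F y" for x y
        by (rule poly_mapping_eqI) (simp add: lkF lookup_add aug_ideal_def)
    qed
    show "bij_betw F (carrier (aug_ideal Q)) (carrier (free_Abelian_group {..<n}))"
      unfolding bij_betw_def
    proof
      show "inj_on F (carrier (aug_ideal Q))"
      proof (rule inj_onI)
        fix f f' assume f: "f \<in> carrier (aug_ideal Q)" and f': "f' \<in> carrier (aug_ideal Q)" and eq: "F f = F f'"
        have onR: "f q = f' q" if qR: "q \<in> R" for q
        proof -
          obtain i where i: "i < n" "q = e i" using e qR unfolding bij_betw_def by auto
          show ?thesis using fun_cong[OF arg_cong[OF eq, of Poly_Mapping.lookup], of i] i by (simp add: lkF)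
        qed
        hence "sum f R = sum f' R" by (rule sum.cong[OF refl])
        moreover have "sum f Q = 0" "sum f' Q = 0" using f f' by (auto simp: aug_ideal_def)
        ultimately have "f c0 = f' c0" using sumQ[of f] sumQ[of f'] by simp
        moreover have "q \<notin> Q \<Longrightarrow> f q = f' q" for q using f f' by (auto simp: aug_ideal_def)
        ultimately show "f = f'" using onR unfolding R_def by (intro ext) (metis Diff_iff singletonD)
      qed
      show "F ` carrier (aug_ideal Q) = carrier (free_Abelian_group {..<n})"
      proof
        show "F ` carrier (aug_ideal Q) \<subseteq> carrier (free_Abelian_group {..<n})"
          by (auto simp: in_keys_iff lkF split: if_splits)
        show "carrier (free_Abelian_group {..<n}) \<subseteq> F ` carrier (aug_ideal Q)"
        proof
          fix p assume p: "p \<in> carrier (free_Abelian_group {..<n})"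
          hence kp: "i \<ge> n \<Longrightarrow> Poly_Mapping.lookup p i = 0" for i by (auto simp: in_keys_iff)
          define f where "f q = (if q \<in> R then Poly_Mapping.lookup p (inv_into {0..<n} e q)
              else if q = c0 then - (\<Sum>i<n. Poly_Mapping.lookup p i) else 0)" for q
          have fe: "i < n \<Longrightarrow> f (e i) = Poly_Mapping.lookup p i" for i
            using eR[of i] e unfolding f_def by (simp add: bij_betw_inv_into_left)
          have "sum f R = (\<Sum>i<n. Poly_Mapping.lookup p i)" using sumR[of f] fe by simp
          moreover have "f c0 = - (\<Sum>i<n. Poly_Mapping.lookup p i)" unfolding f_def R_def by simp
          ultimately have "sum f Q = 0" using sumQ[of f] by simp
          moreover have "q \<notin> Q \<Longrightarrow> f q = 0" for q unfolding f_def R_def using c by auto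
          ultimately have "f \<in> carrier (aug_ideal Q)" by (simp add: aug_ideal_def)
          moreover have "F f = p"
            by (rule poly_mapping_eqI) (auto simp: lkF fe kp)
          ultimately show "p \<in> F ` carrier (aug_ideal Q)" by blast
        qed
      qed
    qed
  qed
  thus ?thesis unfolding n_def by (rule is_isoI)
qed



context zg begin

definition "bic = bicyc_unit G (inv g) H ` H"
definition "NN = (\<lambda>f. Ph f \<one>) ` {f. isaug f}"
definition "TT = {k \<otimes>\<^bsub>UZ\<lparr>carrier := gen\<rparr>\<^esub> s \<otimes>\<^bsub>UZ\<lparr>carrier := gen\<rparr>\<^esub> inv\<^bsub>UZ\<lparr>carrier := gen\<rparr>\<^esub> k |k s. k \<in> carrier (UZ\<lparr>carrier := gen\<rparr>) \<and> s \<in> bic}"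

lemma NN_img: "NN \<subseteq> img"
  unfolding NN_def img_def using H1 by auto

lemma NN_sub: "subgroup NN UZ"
proof -
  interpret UG: group UZ by (rule units_group)
  show ?thesis
  proof (rule UG.subgroupI)
    show "NN \<subseteq> carrier UZ" using NN_img img_units by auto
    show "NN \<noteq> {}" unfolding NN_def using isaug_zero by auto
    show "inv\<^bsub>UZ\<^esub> a \<in> NN" if "a \<in> NN" for a
      using that U_inv isaug_neg unfolding NN_def by auto
    show "a \<otimes>\<^bsub>UZ\<^esub> b \<in> NN" if "a \<in> NN" "b \<in> NN" for a b
      using that U_mult isaug_add unfolding NN_def by (auto simp: UZ_mult)
  qed
qed

lemma invKK: "x \<in> gen \<Longrightarrow> inv\<^bsub>UZ\<lparr>carrier := gen\<rparr>\<^esub> x = inv\<^bsub>UZ\<^esub> x"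
  using group.m_inv_consistent[OF units_group gen_sub] by simp

lemma TT_NN: "TT \<subseteq> NN"
proof
  fix x assume "x \<in> TT"
  then obtain k s where x: "x = gr_mult G (gr_mult G k s) (inv\<^bsub>UZ\<^esub> k)" and k: "k \<in> gen" and s: "s \<in> bic"
    unfolding TT_def using invKK by (auto simp: units_ZG_def)
  obtain f0 k0 where fk: "isaug f0" "k0 \<in> H" "k = Ph f0 k0" using k gen_eq unfolding img_def by auto
  obtain h where h: "h \<in> H" "s = Ph (dd h) \<one>" using s bicyc_Ph unfolding bic_def by auto
  have k0c: "k0 \<in> carrier G" using fk(2) by (rule Hc)
  define F1 where "F1 = (\<lambda>D. act (inv \<one>) f0 D + dd h D)"
  have F1: "isaug F1" unfolding F1_def using isaug_add[OF isaug_act[OF Hi[OF H1] fk(1)] dd_aug[OF h(1)]] .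
  have 1: "gr_mult G k s = Ph F1 k0"
    using Ph_mult[OF _ fk(2) H1, of "dd h" f0] dd_aug[OF h(1)] fk h k0c unfolding F1_def by (simp add: isaug_def)
  define F2 where "F2 = (\<lambda>D. act (inv (inv k0)) F1 D + - act k0 f0 D)"
  have F2: "isaug F2" unfolding F2_def
    using isaug_add[OF isaug_act[OF Hi[OF Hi[OF fk(2)]] F1] isaug_neg[OF isaug_act[OF fk(2) fk(1)]]] .
  have s0: "sum (\<lambda>D. - act k0 f0 D) QQ = 0" using isaug_neg[OF isaug_act[OF fk(2) fk(1)]] by (simp add: isaug_def)
  hence "gr_mult G (Ph F1 k0) (Ph (\<lambda>D. - act k0 f0 D) (inv k0)) = Ph F2 (k0 \<otimes> inv k0)"
    unfolding F2_def using Ph_mult[OF s0 fk(2) Hi[OF fk(2)], of F1] by simp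
  hence "x = Ph F2 \<one>" using x 1 Ph_inv[OF fk(1) fk(2)] fk(3) k0c by simp
  thus "x \<in> NN" unfolding NN_def using F2 by auto
qed

lemma TT_gen: "TT \<subseteq> gen"
  using TT_NN NN_img gen_eq by auto

lemma dd_TT: "h \<in> H \<Longrightarrow> Ph (dd h) \<one> \<in> TT"
proof -
  assume h: "h \<in> H"
  interpret UG: group UZ by (rule units_group)
  have one: "gr_one G \<in> gen" using subgroup.one_closed[OF gen_sub] by (simp add: UZ_one)
  have i1: "inv\<^bsub>UZ\<lparr>carrier := gen\<rparr>\<^esub> (gr_one G) = gr_one G"
    using invKK[OF one] UG.inv_one by (simp add: UZ_one)
  have "gr_mult G (gr_mult G (gr_one G) (Ph (dd h) \<one>)) (gr_one G) = Ph (dd h) \<one>"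
    using gm_one_l[OF Ph_ring] gm_one_r[OF Ph_ring] by simp
  moreover have "bicyc_unit G (inv g) H h \<in> bic" unfolding bic_def using h by simp
  ultimately have "Ph (dd h) \<one> = gr_one G \<otimes>\<^bsub>UZ\<lparr>carrier := gen\<rparr>\<^esub> Ph (dd h) \<one> \<otimes>\<^bsub>UZ\<lparr>carrier := gen\<rparr>\<^esub> inv\<^bsub>UZ\<lparr>carrier := gen\<rparr>\<^esub> (gr_one G)
      \<and> gr_one G \<in> carrier (UZ\<lparr>carrier := gen\<rparr>) \<and> Ph (dd h) \<one> \<in> bic"
    using one i1 bicyc_Ph[OF h] by (simp add: units_ZG_def)
  hence "\<exists>k s. Ph (dd h) \<one> = k \<otimes>\<^bsub>UZ\<lparr>carrier := gen\<rparr>\<^esub> s \<otimes>\<^bsub>UZ\<lparr>carrier := gen\<rparr>\<^esub> inv\<^bsub>UZ\<lparr>carrier := gen\<rparr>\<^esub> k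
      \<and> k \<in> carrier (UZ\<lparr>carrier := gen\<rparr>) \<and> s \<in> bic" by (intro exI)
  thus ?thesis unfolding TT_def mem_Collect_eq .
qed

lemma NC: "normal_closure (UZ\<lparr>carrier := gen\<rparr>) bic = NN"
proof -
  interpret UG: group UZ by (rule units_group)
  have "normal_closure (UZ\<lparr>carrier := gen\<rparr>) bic = generate (UZ\<lparr>carrier := gen\<rparr>) TT"
    unfolding normal_closure_def TT_def ..
  also have "\<dots> = generate UZ TT" using UG.generate_consistent[OF TT_gen gen_sub] .
  finally have e: "normal_closure (UZ\<lparr>carrier := gen\<rparr>) bic = generate UZ TT" .
  have TTc: "TT \<subseteq> carrier UZ" using TT_gen subgroup.subset[OF gen_sub] by auto
  have "generate UZ TT \<subseteq> NN" using UG.generate_subgroup_incl[OF TT_NN NN_sub] .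
  moreover have "NN \<subseteq> generate UZ TT"
  proof
    fix x assume "x \<in> NN"
    then obtain f where f: "isaug f" "x = Ph f \<one>" unfolding NN_def by auto
    have "Ph f \<one> \<in> generate UZ TT"
      by (rule gen_aug[OF UG.generate_is_subgroup[OF TTc] generate.incl[OF dd_TT] f(1)])
    thus "x \<in> generate UZ TT" using f(2) by simp
  qed
  ultimately show ?thesis using e by auto
qed

lemma part2_iso: "(\<lambda>f. Ph f \<one>) \<in> iso (aug_ideal QQ) (UZ\<lparr>carrier := NN\<rparr>)"
proof (rule isoI)
  show "(\<lambda>f. Ph f \<one>) \<in> hom (aug_ideal QQ) (UZ\<lparr>carrier := NN\<rparr>)"
    unfolding hom_def
  proof (intro CollectI conjI ballI)
    show "(\<lambda>f. Ph f \<one>) \<in> carrier (aug_ideal QQ) \<rightarrow> carrier (UZ\<lparr>carrier := NN\<rparr>)"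
      unfolding aug_carrier NN_def by auto
    fix x y assume "x \<in> carrier (aug_ideal QQ)" "y \<in> carrier (aug_ideal QQ)"
    hence "isaug x" "isaug y" unfolding aug_carrier by auto
    thus "Ph (x \<otimes>\<^bsub>aug_ideal QQ\<^esub> y) \<one> = Ph x \<one> \<otimes>\<^bsub>UZ\<lparr>carrier := NN\<rparr>\<^esub> Ph y \<one>"
      using U_mult by (simp add: aug_ideal_def units_ZG_def)
  qed
  show "bij_betw (\<lambda>f. Ph f \<one>) (carrier (aug_ideal QQ)) (carrier (UZ\<lparr>carrier := NN\<rparr>))"
    unfolding bij_betw_def
  proof
    show "inj_on (\<lambda>f. Ph f \<one>) (carrier (aug_ideal QQ))"
      unfolding inj_on_def aug_carrier using Ph_inj[OF _ _ H1 H1] by auto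
    show "(\<lambda>f. Ph f \<one>) ` carrier (aug_ideal QQ) = carrier (UZ\<lparr>carrier := NN\<rparr>)"
      unfolding aug_carrier NN_def by simp
  qed
qed

theorem part2: "UZ\<lparr>carrier := NN\<rparr> \<cong> free_Abelian_group {..<card QQ - 1}"
proof -
  have "UZ\<lparr>carrier := NN\<rparr> \<cong> aug_ideal QQ"
    using is_isoI[OF iso_set_sym_gen[OF part2_iso]] isaug_add
    by (auto simp: aug_carrier aug_ideal_def)
  also have "aug_ideal QQ \<cong> free_Abelian_group {..<card QQ - 1}"
    by (rule aug_free[OF finQQ CC_QQ])
  finally show ?thesis .
qed

end

theorem proposition6p3:
  fixes G :: "('a, 'b) monoid_scheme" and H :: "'a set" and g :: 'a
  assumes "group G" and "finite (carrier G)" and "subgroup H G" and "g \<in> carrier G"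
  defines "C \<equiv> H \<inter> (inv\<^bsub>G\<^esub> g <#\<^bsub>G\<^esub> H #>\<^bsub>G\<^esub> g)"
  defines "Q \<equiv> left_cosets_in G H C"
  defines "K \<equiv> (units_ZG G)\<lparr>carrier := generate (units_ZG G)
               (gr_basis G ` H \<union> psi G (inv\<^bsub>G\<^esub> g) H ` H)\<rparr>"
  shows "(K \<cong> semidirect_r (aug_ideal Q) (G\<lparr>carrier := H\<rparr>)
               (\<lambda>h f. coset_lmult G Q (inv\<^bsub>G\<^esub> h) f))
       \<and> (K\<lparr>carrier := normal_closure K (bicyc_unit G (inv\<^bsub>G\<^esub> g) H ` H)\<rparr>
           \<cong> free_Abelian_group {..< card Q - 1})"
proof -
  have "zg G H g"
    unfolding zg_def zg_axioms_def fgroup_def fgroup_axioms_def using assms(1-4) by auto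
  then interpret Z: zg G H g .
  have CQ: "C = Z.CC" "Q = Z.QQ" unfolding C_def Q_def Z.CC_def Z.QQ_def by simp_all
  have KK: "K = Z.UZ\<lparr>carrier := Z.gen\<rparr>" unfolding K_def Z.gen_def Z.gens_def by simp
  have 1: "K \<cong> semidirect_r (aug_ideal Q) (G\<lparr>carrier := H\<rparr>) (\<lambda>h f. coset_lmult G Q (inv\<^bsub>G\<^esub> h) f)"
    using Z.part1 unfolding KK CQ Z.SD_def .
  have "K\<lparr>carrier := normal_closure K (bicyc_unit G (inv\<^bsub>G\<^esub> g) H ` H)\<rparr> = Z.UZ\<lparr>carrier := Z.NN\<rparr>"
    using Z.NC unfolding KK Z.bic_def by simp
  hence 2: "K\<lparr>carrier := normal_closure K (bicyc_unit G (inv\<^bsub>G\<^esub> g) H ` H)\<rparr> \<cong> free_Abelian_group {..< card Q - 1}"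
    using Z.part2 unfolding CQ by simp
  show ?thesis using 1 2 by simp
qed


end
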